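(* Let $k$ be a positive integer, $a\ge k+2$ an integer and $G=K_a\,\square\,K_a$. Then $\gamma_{P,k}(G/e)=a-k-1$ for every edge $e$ of $G$.
   Context: $K_a$ is the complete graph on $a$ vertices and $\square$ denotes the Cartesian product of graphs. For an edge $e=xy$, the contraction $G/e$ is obtained from $G-e$ by replacing $x$ and $y$ by a new vertex $v_{xy}$ adjacent to all vertices of $N_{G-e}(x)\cup N_{G-e}(y)$ (other than $x,y$). $N_G[v]$ is the closed neighbourhood of $v$, and $N_G[S]$ the union of closed neighbourhoods of vertices of $S$. For $S\subseteq V(G)$, define $\mathcal{P}^{0}_{G,k}(S)=N_G[S]$ and $\mathcal{P}^{i+1}_{G,k}(S)=\bigcup\{N_G[v] : v\in \mathcal{P}^{i}_{G,k}(S),\ |N_G[v]\setminus \mathcal{P}^{i}_{G,k}(S)|\le k\}$; these increase and stabilize to $\mathcal{P}^{\infty}_{G,k}(S)$. $S$ is a $k$-power dominating set if $\mathcal{P}^{\infty}_{G,k}(S)=V(G)$; $\gamma_{P,k}(G)$ is the minimum size of such a set. *)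

theory Defs
  imports Main
begin

text \<open>A (simple) graph is given by a vertex set V and a symmetric irreflexive
  adjacency relation E (only its restriction to V matters).\<close>

definition closed_nbhd :: "'a set \<Rightarrow> ('a \<Rightarrow> 'a \<Rightarrow> bool) \<Rightarrow> 'a \<Rightarrow> 'a set" where
  "closed_nbhd V E v = insert v {u \<in> V. E v u}"

definition closed_nbhd_set :: "'a set \<Rightarrow> ('a \<Rightarrow> 'a \<Rightarrow> bool) \<Rightarrow> 'a set \<Rightarrow> 'a set" where
  "closed_nbhd_set V E S = (\<Union>v\<in>S. closed_nbhd V E v)"

fun kpower_obs :: "'a set \<Rightarrow> ('a \<Rightarrow> 'a \<Rightarrow> bool) \<Rightarrow> nat \<Rightarrow> 'a set \<Rightarrow> nat \<Rightarrow> 'a set" where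
  "kpower_obs V E k S 0 = closed_nbhd_set V E S"
| "kpower_obs V E k S (Suc i) =
     \<Union>{closed_nbhd V E v | v. v \<in> kpower_obs V E k S i \<and>
          card (closed_nbhd V E v - kpower_obs V E k S i) \<le> k}"

definition kpower_obs_inf :: "'a set \<Rightarrow> ('a \<Rightarrow> 'a \<Rightarrow> bool) \<Rightarrow> nat \<Rightarrow> 'a set \<Rightarrow> 'a set" where
  "kpower_obs_inf V E k S = (\<Union>i. kpower_obs V E k S i)"

definition is_kpds :: "'a set \<Rightarrow> ('a \<Rightarrow> 'a \<Rightarrow> bool) \<Rightarrow> nat \<Rightarrow> 'a set \<Rightarrow> bool" where
  "is_kpds V E k S \<longleftrightarrow> S \<subseteq> V \<and> kpower_obs_inf V E k S = V"

definition kpower_dom_num :: "'a set \<Rightarrow> ('a \<Rightarrow> 'a \<Rightarrow> bool) \<Rightarrow> nat \<Rightarrow> nat" where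
  "kpower_dom_num V E k = (LEAST n. \<exists>S. finite S \<and> card S = n \<and> is_kpds V E k S)"

definition complete_V :: "nat \<Rightarrow> nat set" where
  "complete_V a = {..<a}"

definition complete_E :: "nat \<Rightarrow> nat \<Rightarrow> bool" where
  "complete_E u v \<longleftrightarrow> u \<noteq> v"

definition cart_V :: "'a set \<Rightarrow> 'b set \<Rightarrow> ('a \<times> 'b) set" where
  "cart_V V1 V2 = V1 \<times> V2"

definition cart_E :: "('a \<Rightarrow> 'a \<Rightarrow> bool) \<Rightarrow> ('b \<Rightarrow> 'b \<Rightarrow> bool) \<Rightarrow> 'a \<times> 'b \<Rightarrow> 'a \<times> 'b \<Rightarrow> bool" where
  "cart_E E1 E2 p q \<longleftrightarrow> (fst p = fst q \<and> E2 (snd p) (snd q)) \<or> (snd p = snd q \<and> E1 (fst p) (fst q))"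

text \<open>Contraction G/e of the edge e = xy: old vertices v \<notin> {x,y} become Some v,
  the new vertex v_xy is None.\<close>
definition contract_V :: "'a set \<Rightarrow> 'a \<Rightarrow> 'a \<Rightarrow> 'a option set" where
  "contract_V V x y = insert None (Some ` (V - {x, y}))"

definition contract_E :: "('a \<Rightarrow> 'a \<Rightarrow> bool) \<Rightarrow> 'a \<Rightarrow> 'a \<Rightarrow> 'a option \<Rightarrow> 'a option \<Rightarrow> bool" where
  "contract_E E x y p q = (case (p, q) of
      (Some u, Some v) \<Rightarrow> E u v
    | (None, Some v) \<Rightarrow> v \<notin> {x, y} \<and> (E x v \<or> E y v)
    | (Some u, None) \<Rightarrow> u \<notin> {x, y} \<and> (E u x \<or> E u y)
    | (None, None) \<Rightarrow> False)"

end

theory Submission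
  imports Defs
begin


lemma nbhd_mem: "u \<in> closed_nbhd V E v \<longleftrightarrow> u = v \<or> (u \<in> V \<and> E v u)"
  by (auto simp: closed_nbhd_def)

lemma nbhd_finite: "finite V \<Longrightarrow> finite (closed_nbhd V E v)"
  by (auto simp: closed_nbhd_def)

lemma nbhd_sub: "v \<in> V \<Longrightarrow> closed_nbhd V E v \<subseteq> V"
  by (auto simp: closed_nbhd_def)

lemma obs_sub: "S \<subseteq> V \<Longrightarrow> kpower_obs V E k S n \<subseteq> V"
proof (induction n)
  case 0
  show ?case
  proof
    fix u assume "u \<in> kpower_obs V E k S 0"
    then obtain v where "v \<in> S" "u \<in> closed_nbhd V E v" by (auto simp: closed_nbhd_set_def)
    then show "u \<in> V" using 0 by (auto simp: closed_nbhd_def)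
  qed
next
  case (Suc n)
  show ?case
  proof
    fix u assume "u \<in> kpower_obs V E k S (Suc n)"
    then obtain v where "v \<in> kpower_obs V E k S n" "u \<in> closed_nbhd V E v" by auto
    then show "u \<in> V" using Suc by (auto simp: closed_nbhd_def)
  qed
qed

lemma stall:
  assumes fin: "finite V"
    and cl: "\<And>v. v \<in> Ob \<Longrightarrow> card (closed_nbhd V E v - Ob) \<le> k \<Longrightarrow> closed_nbhd V E v \<subseteq> Ob"
    and Ob: "closed_nbhd_set V E S = Ob"
  shows "kpower_obs V E k S n \<subseteq> Ob"
proof (induction n)
  case 0 then show ?case using Ob by simp
next
  case (Suc n)
  show ?case
  proof
    fix u assume "u \<in> kpower_obs V E k S (Suc n)"
    then obtain v where v: "v \<in> kpower_obs V E k S n" "card (closed_nbhd V E v - kpower_obs V E k S n) \<le> k"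
      "u \<in> closed_nbhd V E v" by auto
    have "card (closed_nbhd V E v - Ob) \<le> card (closed_nbhd V E v - kpower_obs V E k S n)"
      by (rule card_mono) (use Suc nbhd_finite[OF fin] in auto)
    with v Suc cl show "u \<in> Ob" by fastforce
  qed
qed

lemma not_kpds_stall:
  assumes fin: "finite V"
    and cl: "\<And>v. v \<in> Ob \<Longrightarrow> card (closed_nbhd V E v - Ob) \<le> k \<Longrightarrow> closed_nbhd V E v \<subseteq> Ob"
    and Ob: "closed_nbhd_set V E S = Ob"
    and u: "u \<in> V" "u \<notin> Ob"
  shows "\<not> is_kpds V E k S"
proof
  assume "is_kpds V E k S"
  then have "u \<in> kpower_obs_inf V E k S" using u by (simp add: is_kpds_def)
  then obtain n where "u \<in> kpower_obs V E k S n" by (auto simp: kpower_obs_inf_def)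
  moreover have "kpower_obs V E k S n \<subseteq> Ob" by (rule stall[OF fin cl Ob])
  ultimately show False using u by auto
qed

lemma iso_obs:
  assumes inj: "inj g" and img: "g ` V = V'"
    and edge: "\<And>u v. u \<in> V \<Longrightarrow> v \<in> V \<Longrightarrow> E' (g u) (g v) = E u v"
    and S: "S \<subseteq> V"
  shows "kpower_obs V' E' k (g ` S) n = g ` kpower_obs V E k S n"
proof -
  have N: "closed_nbhd V' E' (g v) = g ` closed_nbhd V E v" if v: "v \<in> V" for v
  proof -
    have "{u\<in>V'. E' (g v) u} = g ` {u\<in>V. E' (g v) (g u)}" unfolding img[symmetric] by blast
    also have "{u\<in>V. E' (g v) (g u)} = {u\<in>V. E v u}" using edge v by blast
    then have "g ` {u\<in>V. E' (g v) (g u)} = g ` {u\<in>V. E v u}" by simp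
    finally show ?thesis by (simp add: closed_nbhd_def)
  qed
  show ?thesis
  proof (induction n)
    case 0
    have "(\<Union>v\<in>g ` S. closed_nbhd V' E' v) = (\<Union>s\<in>S. g ` closed_nbhd V E s)"
      unfolding image_image using N S by (intro SUP_cong) auto
    then show ?case by (simp add: closed_nbhd_set_def image_UN)
  next
    case (Suc n)
    let ?P = "kpower_obs V E k S n"
    let ?P' = "kpower_obs V' E' k (g ` S) n"
    have PV: "?P \<subseteq> V" using obs_sub[OF S] .
    have C: "card (closed_nbhd V' E' (g v) - g ` ?P) = card (closed_nbhd V E v - ?P)" if "v \<in> ?P" for v
    proof -
      have "v \<in> V" using that PV by blast
      then have "closed_nbhd V' E' (g v) - g ` ?P = g ` (closed_nbhd V E v - ?P)"
        by (simp add: N image_set_diff[OF inj])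
      then show ?thesis using inj by (simp add: card_image inj_on_subset)
    qed
    show ?case
    proof (rule set_eqI)
      fix u
      show "u \<in> kpower_obs V' E' k (g ` S) (Suc n) \<longleftrightarrow> u \<in> g ` kpower_obs V E k S (Suc n)"
      proof
        assume "u \<in> kpower_obs V' E' k (g ` S) (Suc n)"
        then obtain w where w: "w \<in> ?P'" "card (closed_nbhd V' E' w - ?P') \<le> k" "u \<in> closed_nbhd V' E' w"
          by auto
        then obtain v where v: "v \<in> ?P" "w = g v" using Suc by auto
        have vV: "v \<in> V" using v PV by blast
        have "card (closed_nbhd V E v - ?P) \<le> k" using w(2) C[OF v(1)] v(2) Suc by simp
        moreover obtain u0 where "u0 \<in> closed_nbhd V E v" "u = g u0" using w(3) v(2) N[OF vV] by auto
        ultimately show "u \<in> g ` kpower_obs V E k S (Suc n)" using v(1) by auto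
      next
        assume "u \<in> g ` kpower_obs V E k S (Suc n)"
        then obtain u0 v where uv: "u = g u0" "v \<in> ?P" "card (closed_nbhd V E v - ?P) \<le> k" "u0 \<in> closed_nbhd V E v"
          by auto
        have vV: "v \<in> V" using uv PV by blast
        have "g v \<in> ?P'" using Suc uv by simp
        moreover have "card (closed_nbhd V' E' (g v) - ?P') \<le> k" using C[OF uv(2)] uv(3) Suc by simp
        moreover have "u \<in> closed_nbhd V' E' (g v)" using N[OF vV] uv by simp
        ultimately show "u \<in> kpower_obs V' E' k (g ` S) (Suc n)" by auto
      qed
    qed
  qed
qed

lemma iso_kpds:
  assumes inj: "inj g" and img: "g ` V = V'"
    and edge: "\<And>u v. u \<in> V \<Longrightarrow> v \<in> V \<Longrightarrow> E' (g u) (g v) = E u v"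
    and "is_kpds V E k S"
  shows "is_kpds V' E' k (g ` S)"
proof -
  have S: "S \<subseteq> V" using assms(4) by (simp add: is_kpds_def)
  have "kpower_obs_inf V' E' k (g ` S) = g ` kpower_obs_inf V E k S"
    using iso_obs[where g=g and V=V and V'=V' and E=E and E'=E', OF inj img edge S] by (auto simp: kpower_obs_inf_def)
  then show ?thesis using assms(4) img S by (auto simp: is_kpds_def)
qed

lemma iso_ex:
  assumes inj: "inj g" and img: "g ` V = V'"
    and edge: "\<And>u v. u \<in> V \<Longrightarrow> v \<in> V \<Longrightarrow> E' (g u) (g v) = E u v"
    and "\<exists>S. finite S \<and> card S = n \<and> is_kpds V E k S"
  shows "\<exists>S. finite S \<and> card S = n \<and> is_kpds V' E' k S"
  proof -
  obtain S where S: "finite S" "card S = n" "is_kpds V E k S" using assms(4) by blast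
  have "card (g ` S) = n" using S inj by (simp add: card_image inj_on_subset)
  then show ?thesis using S iso_kpds[where g=g and V=V and V'=V' and E=E and E'=E', OF inj img edge S(3)]
    by blast
qed

lemma iso_num:
  assumes inj: "inj g" and img: "g ` V = V'"
    and edge: "\<And>u v. u \<in> V \<Longrightarrow> v \<in> V \<Longrightarrow> E' (g u) (g v) = E u v"
    and inj2: "inj h" and img2: "h ` V' = V"
    and edge2: "\<And>u v. u \<in> V' \<Longrightarrow> v \<in> V' \<Longrightarrow> E (h u) (h v) = E' u v"
  shows "kpower_dom_num V E k = kpower_dom_num V' E' k"
proof -
  have "(\<exists>S. finite S \<and> card S = n \<and> is_kpds V E k S) = (\<exists>S. finite S \<and> card S = n \<and> is_kpds V' E' k S)" for n
  proof
    assume "\<exists>S. finite S \<and> card S = n \<and> is_kpds V E k S"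
    then show "\<exists>S. finite S \<and> card S = n \<and> is_kpds V' E' k S"
      using iso_ex[where g=g and V=V and V'=V' and E=E and E'=E' and n=n and k=k] inj img edge by blast
  next
    assume "\<exists>S. finite S \<and> card S = n \<and> is_kpds V' E' k S"
    then show "\<exists>S. finite S \<and> card S = n \<and> is_kpds V E k S"
      using iso_ex[where g=h and V=V' and V'=V and E=E' and E'=E and n=n and k=k] inj2 img2 edge2 by blast
  qed
  then show ?thesis by (simp add: kpower_dom_num_def)
qed




lemma EE_simp: "cart_E complete_E complete_E (r,c) (r',c') \<longleftrightarrow> (r=r' \<and> c\<noteq>c') \<or> (c=c' \<and> r\<noteq>r')"
  by (auto simp: cart_E_def complete_E_def)

lemma VV_mem: "(r,c) \<in> cart_V (complete_V a) (complete_V a) \<longleftrightarrow> r<a \<and> c<a"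
  by (auto simp: cart_V_def complete_V_def)

lemma W_None: "None \<in> contract_V V x y" by (simp add: contract_V_def)
lemma W_Some: "Some u \<in> contract_V V x y \<longleftrightarrow> u \<in> V \<and> u \<noteq> x \<and> u \<noteq> y"
  by (auto simp: contract_V_def)
lemma F_SS: "contract_E E x y (Some u) (Some v) = E u v" by (simp add: contract_E_def)
lemma F_NS: "contract_E E x y None (Some v) = (v \<noteq> x \<and> v \<noteq> y \<and> (E x v \<or> E y v))" by (simp add: contract_E_def)
lemma F_SN: "contract_E E x y (Some v) None = (v \<noteq> x \<and> v \<noteq> y \<and> (E v x \<or> E v y))" by (simp add: contract_E_def)
lemma F_NN: "\<not> contract_E E x y None None" by (simp add: contract_E_def)

lemma in_P0: "v \<in> S \<Longrightarrow> u \<in> closed_nbhd V E v \<Longrightarrow> u \<in> kpower_obs V E k S 0"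
  by (auto simp: closed_nbhd_set_def)

lemmas gsimps = EE_simp VV_mem W_None W_Some F_SS F_NS F_SN F_NN nbhd_mem

lemma W_fin: "finite (contract_V (cart_V (complete_V a) (complete_V a)) x y)"
  by (simp add: contract_V_def cart_V_def complete_V_def)

lemma card_lessThan_diff: "finite B \<Longrightarrow> a - card B \<le> card ({..<a::nat} - B)"
  by (metis card_lessThan diff_card_le_card_Diff finite_lessThan)

lemma lb_inj: "finite X \<Longrightarrow> f ` D \<subseteq> X \<Longrightarrow> inj_on f D \<Longrightarrow> m \<le> card D \<Longrightarrow> m \<le> card X"
proof -
  assume "finite X" "f ` D \<subseteq> X" "inj_on f D" "m \<le> card D"
  moreover have "card D \<le> card X" by (rule card_inj_on_le) fact+
  ultimately show ?thesis by linarith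
qed

lemma card_ins_le: "card (insert x A) \<le> card A + 1"
  by (cases "finite A") (auto simp: card_insert_if)

context
  fixes a k i j j' :: nat
  assumes k1: "1 \<le> k" and ak: "k + 2 \<le> a" and ia: "i < a" and ja: "j<a" and j'a: "j'<a" and jj: "j \<noteq> j'"
begin

abbreviation "WW \<equiv> contract_V (cart_V (complete_V a) (complete_V a)) (i,j) (i,j')"
abbreviation "FF \<equiv> contract_E (cart_E complete_E complete_E) (i,j) (i,j')"

lemma upper: "\<exists>S. finite S \<and> card S = a - k - 1 \<and> is_kpds WW FF k S"
proof -
  define m where "m = a - k - 2"
  have "m \<le> card ({..<a} - {i})" using ia ak by (simp add: m_def)
  then obtain Rs where Rs: "Rs \<subseteq> {..<a} - {i}" "card Rs = m" "finite Rs"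
    by (meson obtain_subset_with_card_n)
  have "card ({..<a} - {j,j'}) = a - 2" using ja j'a jj by (simp add: card_Diff_subset)
  then have "m \<le> card ({..<a} - {j,j'})" using ak by (simp add: m_def)
  then obtain Cs where Cs: "Cs \<subseteq> {..<a} - {j,j'}" "card Cs = m" "finite Cs"
    by (meson obtain_subset_with_card_n)
  obtain g where g: "bij_betw g Rs Cs" using finite_same_card_bij Rs Cs by metis
  define S where "S = insert None ((\<lambda>r. Some (r, g r)) ` Rs)"
  have fin: "finite S" using Rs by (simp add: S_def)
  have inj: "inj_on (\<lambda>r. Some (r, g r)) Rs" by (auto simp: inj_on_def)
  have "card ((\<lambda>r. Some (r, g r)) ` Rs) = m" using Rs inj by (simp add: card_image)
  then have cardS: "card S = a - k - 1" unfolding S_def using Rs ak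
    by (subst card_insert_disjoint) (auto simp: m_def)
  have gR: "r \<in> Rs \<Longrightarrow> g r \<in> Cs" for r using g by (auto simp: bij_betw_def)
  have Rsm: "r < a \<and> r \<noteq> i" if "r \<in> Rs" for r using Rs(1) that by auto
  have Csm: "c < a \<and> c \<noteq> j \<and> c \<noteq> j'" if "c \<in> Cs" for c using Cs(1) that by auto
  have SW: "S \<subseteq> WW" using Rsm Csm gR by (auto simp: S_def gsimps)
  define P0 where "P0 = kpower_obs WW FF k S 0"
  have h0: "None \<in> P0" unfolding P0_def by (rule in_P0[of None]) (auto simp: S_def nbhd_mem)
  have h1: "Some (r,c) \<in> P0" if hyp: "Some (r,c) \<in> WW" "r = i \<or> c = j \<or> c = j' \<or> r \<in> Rs \<or> c \<in> Cs" for r c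
  proof -
    consider "r = i \<or> c = j \<or> c = j'" | "r \<in> Rs" | "c \<in> Cs" using hyp by blast
    then show ?thesis
    proof cases
      case 1
      then have "Some (r,c) \<in> closed_nbhd WW FF None" using that by (auto simp: gsimps)
      then show ?thesis unfolding P0_def by (rule in_P0[rotated]) (simp add: S_def)
    next
      case 2
      then have "Some (r,c) \<in> closed_nbhd WW FF (Some (r, g r))" using that by (auto simp: gsimps)
      then show ?thesis unfolding P0_def by (rule in_P0[rotated]) (use 2 in \<open>simp add: S_def\<close>)
    next
      case 3
      then obtain r0 where r0: "r0 \<in> Rs" "c = g r0" using g by (auto simp: bij_betw_def)
      then have "Some (r,c) \<in> closed_nbhd WW FF (Some (r0, g r0))" using that by (auto simp: gsimps)
      then show ?thesis unfolding P0_def by (rule in_P0[rotated]) (use r0 in \<open>simp add: S_def\<close>)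
    qed
  qed
  have h2: "Some (r,c) \<in> kpower_obs WW FF k S 1" if "Some (r,c) \<in> WW" and
     False: "\<not> (r = i \<or> c = j \<or> c = j' \<or> r \<in> Rs \<or> c \<in> Cs)" for r c
  proof -
    let ?v = "Some (r, j)"
    have rv: "r \<noteq> i" "r < a" using False that by (auto simp: gsimps)
    have vP: "?v \<in> P0" using h1 rv ja by (simp add: gsimps)
    have sub: "closed_nbhd WW FF ?v - P0 \<subseteq> (\<lambda>c'. Some (r,c')) ` ({..<a} - (Cs \<union> {j,j'}))"
    proof
      fix u assume u: "u \<in> closed_nbhd WW FF ?v - P0"
      show "u \<in> (\<lambda>c'. Some (r,c')) ` ({..<a} - (Cs \<union> {j,j'}))"
      proof (cases u)
        case None then show ?thesis using u h0 by simp
      next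
        case (Some p)
        obtain r' c' where p: "p = (r',c')" by force
        have "Some (r',c') \<in> WW" "r' = r \<and> c' \<noteq> j \<or> c' = j \<and> r' \<noteq> r" 
          using u vP unfolding Some p by (auto simp: gsimps)
        moreover have "Some (r',c') \<notin> P0" using u Some p by simp
        ultimately show ?thesis using h1[of r' c'] unfolding Some p by (auto simp: gsimps)
      qed
    qed
    have "card ({..<a} - (Cs \<union> {j,j'})) = k"
    proof -
      have "card (Cs \<union> {j,j'}) = m + 2" using Cs jj by (subst card_Un_disjoint) auto
      moreover have "Cs \<union> {j,j'} \<subseteq> {..<a}" using Cs ja j'a by auto
      ultimately show ?thesis using ak by (simp add: card_Diff_subset Cs m_def)
    qed
    then have "card (closed_nbhd WW FF ?v - P0) \<le> k"
      using card_mono[OF _ sub] card_image_le[of "{..<a} - (Cs \<union> {j,j'})" "\<lambda>c'. Some (r,c')"]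
      by fastforce
    moreover have "Some (r,c) \<in> closed_nbhd WW FF ?v" using False that by (auto simp: gsimps)
    ultimately show ?thesis using vP by (auto simp: P0_def)
  qed
  have P0i: "P0 \<subseteq> kpower_obs_inf WW FF k S" unfolding kpower_obs_inf_def P0_def by blast
  have P1i: "kpower_obs WW FF k S 1 \<subseteq> kpower_obs_inf WW FF k S" unfolding kpower_obs_inf_def by blast
  have "kpower_obs_inf WW FF k S = WW"
  proof
    show "kpower_obs_inf WW FF k S \<subseteq> WW" using obs_sub[OF SW] by (auto simp: kpower_obs_inf_def)
    show "WW \<subseteq> kpower_obs_inf WW FF k S"
    proof
      fix u assume u: "u \<in> WW"
      show "u \<in> kpower_obs_inf WW FF k S"
      proof (cases u)
        case None then show ?thesis using h0 P0i by blast
      next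
        case (Some p)
        obtain r c where p: "p = (r,c)" by force
        show ?thesis
        proof (cases "r = i \<or> c = j \<or> c = j' \<or> r \<in> Rs \<or> c \<in> Cs")
          case True then show ?thesis using h1[of r c] u Some p P0i by blast
        next
          case False then show ?thesis using h2[of r c] u Some p P1i by blast
        qed
      qed
    qed
  qed
  then show ?thesis using fin cardS SW by (auto simp: is_kpds_def)
qed


lemma lower:
  assumes SW: "S \<subseteq> WW" and fin: "finite S" and cs: "card S + k + 2 \<le> a"
  shows "\<not> is_kpds WW FF k S"
proof -
  define T where "T = {v. Some v \<in> S}"
  define n where "n = (if None \<in> S then 1 else 0::nat)"
  define R where "R = fst ` T \<union> (if None \<in> S then {i} else {})"
  define C where "C = snd ` T \<union> (if None \<in> S then {j,j'} else {})"
  define Ob where "Ob = closed_nbhd_set WW FF S"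
  have finT: "finite T" unfolding T_def using finite_vimageI[OF fin, of Some] by (simp add: vimage_def)
  have Sdec: "S = Some ` T \<union> (S \<inter> {None})"
  proof
    show "S \<subseteq> Some ` T \<union> (S \<inter> {None})"
    proof
      fix x assume "x \<in> S" then show "x \<in> Some ` T \<union> (S \<inter> {None})" by (cases x) (auto simp: T_def)
    qed
  qed (auto simp: T_def)
  have "card S = card (Some ` T) + card (S \<inter> {None})"
    using finT fin by (subst Sdec) (rule card_Un_disjoint, auto)
  moreover have "card (Some ` T) = card T" by (simp add: card_image)
  moreover have "card (S \<inter> {None}) = n" by (auto simp: n_def)
  ultimately have cT: "card T + n \<le> card S" by simp
  have finR: "finite R" and finC: "finite C" using finT by (auto simp: R_def C_def)
  have cR: "card R \<le> card T + n"
  proof -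
    have "card R \<le> card (fst ` T) + card (if None \<in> S then {i} else {})" unfolding R_def by (rule card_Un_le)
    also have "\<dots> \<le> card T + n" using card_image_le[OF finT, of fst] by (simp add: n_def)
    finally show ?thesis .
  qed
  have cC: "card C \<le> card T + 2 * n"
  proof -
    have "card C \<le> card (snd ` T) + card (if None \<in> S then {j,j'} else {})" unfolding C_def by (rule card_Un_le)
    also have "\<dots> \<le> card T + 2 * n" using card_image_le[OF finT, of snd] jj by (simp add: n_def)
    finally show ?thesis .
  qed
  have cR': "card R + k + 2 \<le> a" using cR cT cs by linarith
  have cC': "card C + k + 1 \<le> a" using cC cT cs n_def by (cases "None \<in> S") auto
  have cC'': "card C + k + 2 \<le> a" if "None \<notin> S" using cC cT cs that by (simp add: n_def)
  have Tm: "fst t < a \<and> snd t < a \<and> t \<noteq> (i,j) \<and> t \<noteq> (i,j')" if "t \<in> T" for t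
    using that SW by (cases t) (auto simp: T_def gsimps)
  have memO: "Some (r,c) \<in> Ob \<longleftrightarrow> r<a \<and> c<a \<and> (r,c)\<noteq>(i,j) \<and> (r,c)\<noteq>(i,j') \<and> (r\<in>R \<or> c\<in>C)" for r c
  proof
    assume "Some (r,c) \<in> Ob"
    then obtain v where v: "v \<in> S" "Some (r,c) \<in> closed_nbhd WW FF v" by (auto simp: Ob_def closed_nbhd_set_def)
    show "r<a \<and> c<a \<and> (r,c)\<noteq>(i,j) \<and> (r,c)\<noteq>(i,j') \<and> (r\<in>R \<or> c\<in>C)"
    proof (cases v)
      case None then show ?thesis using v by (auto simp: gsimps R_def C_def)
    next
      case (Some p)
      obtain r0 c0 where p: "p = (r0,c0)" by force
      have "(r0,c0) \<in> T" using v Some p by (simp add: T_def)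
      then have "r0 \<in> R" "c0 \<in> C" by (force simp: R_def C_def)+
      moreover have "(r,c) = (r0,c0) \<or> (Some (r,c) \<in> WW \<and> ((r=r0) \<or> (c=c0)))"
        using v Some p by (auto simp: gsimps)
      ultimately show ?thesis using Tm[OF \<open>(r0,c0) \<in> T\<close>] by (auto simp: gsimps)
    qed
  next
    assume h: "r<a \<and> c<a \<and> (r,c)\<noteq>(i,j) \<and> (r,c)\<noteq>(i,j') \<and> (r\<in>R \<or> c\<in>C)"
    have inW: "Some (r,c) \<in> WW" using h by (simp add: gsimps)
    consider "r \<in> fst ` T" | "c \<in> snd ` T" | "None \<in> S" "r = i \<or> c = j \<or> c = j'"
      using h by (auto simp: R_def C_def split: if_splits)
    then show "Some (r,c) \<in> Ob"
    proof cases
      case 1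
      then obtain c0 where c0: "(r,c0) \<in> T" by force
      have "Some (r,c) \<in> closed_nbhd WW FF (Some (r,c0))" using inW by (cases "c = c0") (auto simp: gsimps)
      then show ?thesis unfolding Ob_def using c0 by (auto simp: closed_nbhd_set_def T_def)
    next
      case 2
      then obtain r0 where r0: "(r0,c) \<in> T" by force
      have "Some (r,c) \<in> closed_nbhd WW FF (Some (r0,c))" using inW by (cases "r = r0") (auto simp: gsimps)
      then show ?thesis unfolding Ob_def using r0 by (auto simp: closed_nbhd_set_def T_def)
    next
      case 3
      have "Some (r,c) \<in> closed_nbhd WW FF None" using inW 3(2) h by (auto simp: gsimps)
      then show ?thesis unfolding Ob_def using 3(1) by (auto simp: closed_nbhd_set_def)
    qed
  qed
  have memN: "None \<in> Ob \<longleftrightarrow> None \<in> S \<or> (\<exists>t\<in>T. fst t = i \<or> snd t = j \<or> snd t = j')"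
  proof
    assume "None \<in> Ob"
    then obtain v where v: "v \<in> S" "None \<in> closed_nbhd WW FF v" by (auto simp: Ob_def closed_nbhd_set_def)
    show "None \<in> S \<or> (\<exists>t\<in>T. fst t = i \<or> snd t = j \<or> snd t = j')"
    proof (cases v)
      case None then show ?thesis using v by simp
    next
      case (Some p)
      obtain r0 c0 where p: "p = (r0,c0)" by force
      have "(r0,c0) \<in> T" using v Some p by (simp add: T_def)
      moreover have "r0 = i \<or> c0 = j \<or> c0 = j'" using v Some p by (auto simp: gsimps)
      ultimately show ?thesis by force
    qed
  next
    assume "None \<in> S \<or> (\<exists>t\<in>T. fst t = i \<or> snd t = j \<or> snd t = j')"
    then show "None \<in> Ob"
    proof
      assume "None \<in> S" then show ?thesis unfolding Ob_def by (auto simp: closed_nbhd_set_def nbhd_mem)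
    next
      assume "\<exists>t\<in>T. fst t = i \<or> snd t = j \<or> snd t = j'"
      then obtain r0 c0 where t: "(r0,c0) \<in> T" "r0 = i \<or> c0 = j \<or> c0 = j'" by force
      have "None \<in> closed_nbhd WW FF (Some (r0,c0))" using Tm[OF t(1)] t(2) jj by (auto simp: gsimps)
      then show ?thesis unfolding Ob_def using t(1) by (auto simp: closed_nbhd_set_def T_def)
    qed
  qed
  have finX: "finite (closed_nbhd WW FF v - Ob)" for v using nbhd_finite[OF W_fin] by blast
  have right: "k+1 \<le> card (closed_nbhd WW FF v - Ob)"
    if "f ` D \<subseteq> closed_nbhd WW FF v - Ob" "inj_on f D" "k+1 \<le> card D" for f :: "nat \<Rightarrow> (nat \<times> nat) option" and D v
    using lb_inj[OF finX that] .
  have cD1: "k + 1 \<le> card ({..<a} - insert i R)"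
    using card_lessThan_diff[of "insert i R" a, OF finite.insertI[OF finR]] card_ins_le[of i R] cR' by linarith
  have cD2: "k + 1 \<le> card ({..<a} - C)"
    using card_lessThan_diff[of C a, OF finC] cC' by linarith
  have cD3: "k \<le> card ({..<a} - insert j (insert j' C))" if "None \<notin> S"
    using card_lessThan_diff[of "insert j (insert j' C)" a] finC card_ins_le[of j "insert j' C"]
      card_ins_le[of j' C] cC''[OF that] by simp
  have cD4: "k + 1 \<le> card ({..<a} - insert j (insert j' C))" if "None \<notin> S" "j \<in> C \<or> j' \<in> C"
  proof -
    have "card (insert j (insert j' C)) \<le> card C + 1"
      using that(2) card_ins_le[of j C] card_ins_le[of j' C] by (auto simp: insert_absorb insert_commute)
    then show ?thesis using card_lessThan_diff[of "insert j (insert j' C)" a] finC cC''[OF that(1)] by simp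
  qed
  have key: "closed_nbhd WW FF v \<subseteq> Ob \<or> k + 1 \<le> card (closed_nbhd WW FF v - Ob)" if vO: "v \<in> Ob" for v
  proof (cases v)
    case None
    show ?thesis
    proof (cases "None \<in> S")
      case True
      have "closed_nbhd WW FF None \<subseteq> Ob"
      proof
        fix u assume u: "u \<in> closed_nbhd WW FF None"
        show "u \<in> Ob"
        proof (cases u)
          case None then show ?thesis using vO \<open>v = None\<close> by simp
        next
          case (Some p)
          obtain r c where p: "p = (r,c)" by force
          show ?thesis using u True unfolding Some p by (auto simp: gsimps memO R_def C_def)
        qed
      qed
      then show ?thesis using None by simp
    next
      case False
      consider "j \<notin> C" | "j' \<notin> C" | "j \<in> C" "j' \<in> C" "i \<notin> R" | "j \<in> C" "j' \<in> C" "i \<in> R" by blast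
      then show ?thesis
      proof cases
        case 1
        have "(\<lambda>r'. Some (r',j)) ` ({..<a} - insert i R) \<subseteq> closed_nbhd WW FF v - Ob"
          using 1 None ja jj by (auto simp: gsimps memO)
        then show ?thesis using right[OF _ _ cD1] by (auto simp: inj_on_def)
      next
        case 2
        have "(\<lambda>r'. Some (r',j')) ` ({..<a} - insert i R) \<subseteq> closed_nbhd WW FF v - Ob"
          using 2 None j'a jj by (auto simp: gsimps memO)
        then show ?thesis using right[OF _ _ cD1] by (auto simp: inj_on_def)
      next
        case 3
        have "(\<lambda>c'. Some (i,c')) ` ({..<a} - C) \<subseteq> closed_nbhd WW FF v - Ob"
          using 3 None ia by (auto simp: gsimps memO)
        then show ?thesis using right[OF _ _ cD2] by (auto simp: inj_on_def)
      next
        case 4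
        have "closed_nbhd WW FF None \<subseteq> Ob"
        proof
          fix u assume u: "u \<in> closed_nbhd WW FF None"
          show "u \<in> Ob"
          proof (cases u)
            case None then show ?thesis using vO \<open>v = None\<close> by simp
          next
            case (Some p)
            obtain r c where p: "p = (r,c)" by force
            show ?thesis using u 4 unfolding Some p by (auto simp: gsimps memO)
          qed
        qed
        then show ?thesis using None by simp
      qed
    qed
  next
    case (Some p)
    obtain r c where p: "p = (r,c)" by force
    have rc: "r<a" "c<a" "(r,c)\<noteq>(i,j)" "(r,c)\<noteq>(i,j')" "r\<in>R \<or> c\<in>C" using vO memO[of r c] Some p by auto
    have NS: "None \<in> S \<Longrightarrow> i \<in> R \<and> j \<in> C \<and> j' \<in> C" by (simp add: R_def C_def)
    consider "r\<in>R" "c\<in>C" | "r\<in>R" "c\<notin>C" | "r\<notin>R" "c\<in>C" "r\<noteq>i"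
      | "r\<notin>R" "c\<in>C" "r=i" "j\<in>C \<or> j'\<in>C" | "r\<notin>R" "c\<in>C" "r=i" "j\<notin>C" "j'\<notin>C"
      using rc(5) by blast
    then show ?thesis
    proof cases
      case 1
      have "closed_nbhd WW FF (Some (r,c)) \<subseteq> Ob"
      proof
        fix u assume u: "u \<in> closed_nbhd WW FF (Some (r,c))"
        show "u \<in> Ob"
        proof (cases u)
          case None
          have adj: "r = i \<or> c = j \<or> c = j'" using u None by (auto simp: gsimps)
          show ?thesis
          proof (cases "None \<in> S")
            case True then show ?thesis using None memN by simp
          next
            case False
            then have "r \<in> fst ` T" "c \<in> snd ` T" using 1 by (auto simp: R_def C_def)
            then have "\<exists>t\<in>T. fst t = i \<or> snd t = j \<or> snd t = j'" using adj by force
            then show ?thesis using None memN by simp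
          qed
        next
          case (Some q)
          obtain r' c' where q: "q = (r',c')" by force
          show ?thesis using u 1 vO \<open>v = Some p\<close> p unfolding Some q by (auto simp: gsimps memO)
        qed
      qed
      then show ?thesis using Some p by simp
    next
      case 2
      have "(\<lambda>r'. Some (r',c)) ` ({..<a} - insert i R) \<subseteq> closed_nbhd WW FF v - Ob"
        using 2 rc Some p by (auto simp: gsimps memO)
      then show ?thesis using right[OF _ _ cD1] by (auto simp: inj_on_def)
    next
      case 3
      have "(\<lambda>c'. Some (r,c')) ` ({..<a} - C) \<subseteq> closed_nbhd WW FF v - Ob"
        using 3 rc Some p by (auto simp: gsimps memO)
      then show ?thesis using right[OF _ _ cD2] by (auto simp: inj_on_def)
    next
      case 4
      have nS: "None \<notin> S" using NS 4 by blast
      have m4: "Some (r,c') \<in> closed_nbhd WW FF v - Ob" if "c' \<in> {..<a} - insert j (insert j' C)" for c'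
      proof -
        from that have c': "c'<a" "c'\<noteq>j" "c'\<noteq>j'" "c'\<notin>C" by auto
        have "c' \<noteq> c" using c' 4(2) by auto
        then show ?thesis using c' 4(1,3) Some p ia by (simp add: gsimps memO)
      qed
      have sub4: "(\<lambda>c'. Some (r,c')) ` ({..<a} - insert j (insert j' C)) \<subseteq> closed_nbhd WW FF v - Ob"
        using m4 by blast
      have inj4: "inj_on (\<lambda>c'. Some (r,c')) ({..<a} - insert j (insert j' C))" by (simp add: inj_on_def)
      have "k+1 \<le> card (closed_nbhd WW FF v - Ob)" by (rule right[OF sub4 inj4 cD4[OF nS 4(4)]])
      then show ?thesis by simp
    next
      case 5
      have nS: "None \<notin> S" using NS 5 by blast
      define D where "D = {..<a} - insert j (insert j' C)"
      have finD: "finite D" by (simp add: D_def)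
      have sub: "insert None ((\<lambda>c'. Some (r,c')) ` D) \<subseteq> closed_nbhd WW FF v - Ob"
      proof -
        have "None \<notin> Ob"
        proof
          assume "None \<in> Ob"
          then have "\<exists>t\<in>T. fst t = i \<or> snd t = j \<or> snd t = j'" using memN nS by simp
          then show False using 5 by (force simp: R_def C_def)
        qed
        moreover have "None \<in> closed_nbhd WW FF v" using 5 rc Some p by (auto simp: gsimps)
        moreover have "(\<lambda>c'. Some (r,c')) ` D \<subseteq> closed_nbhd WW FF v - Ob"
          using 5 rc Some p by (auto simp: gsimps memO D_def)
        ultimately show ?thesis by blast
      qed
      have "card (insert None ((\<lambda>c'. Some (r,c')) ` D)) = card D + 1"
        using finD by (subst card_insert_disjoint) (auto simp: card_image inj_on_def)
      moreover have "k \<le> card D" using cD3[OF nS] by (simp add: D_def)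
      ultimately have "k + 1 \<le> card (insert None ((\<lambda>c'. Some (r,c')) ` D))" by simp
      then show ?thesis using card_mono[OF finX sub] by simp
    qed
  qed
  have cl: "closed_nbhd WW FF v \<subseteq> Ob" if "v \<in> Ob" "card (closed_nbhd WW FF v - Ob) \<le> k" for v
    using key[OF that(1)] that(2) by linarith
  have "card ({..<a} - insert i R) \<ge> k + 1"
    using card_lessThan_diff[of "insert i R" a, OF finite.insertI[OF finR]] card_ins_le[of i R] cR' by linarith
  then have "{..<a} - insert i R \<noteq> {}" by (intro notI) simp
  then obtain r where r: "r \<in> {..<a} - insert i R" by blast
  have "card ({..<a} - C) \<ge> k + 1"
    using card_lessThan_diff[of C a, OF finC] cC' by linarith
  then have "{..<a} - C \<noteq> {}" by (intro notI) simp
  then obtain c where c: "c \<in> {..<a} - C" by blast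
  have "Some (r,c) \<in> WW" "Some (r,c) \<notin> Ob" using r c memO[of r c] by (auto simp: gsimps)
  then show ?thesis using not_kpds_stall[OF W_fin cl Ob_def[symmetric]] by blast
qed


lemma row_case: "kpower_dom_num WW FF k = a - k - 1"
  unfolding kpower_dom_num_def
proof (rule Least_equality)
  show "\<exists>S. finite S \<and> card S = a - k - 1 \<and> is_kpds WW FF k S" by (rule upper)
next
  fix n assume "\<exists>S. finite S \<and> card S = n \<and> is_kpds WW FF k S"
  then obtain S where S: "finite S" "card S = n" "is_kpds WW FF k S" by blast
  have SW: "S \<subseteq> WW" using S(3) by (simp add: is_kpds_def)
  show "a - k - 1 \<le> n"
  proof (rule ccontr)
    assume "\<not> a - k - 1 \<le> n"
    then have "card S + k + 2 \<le> a" using S(2) by linarith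
    then show False using lower[OF SW S(1)] S(3) by blast
  qed
qed

end

lemma swap_iso_V: "map_option prod.swap ` contract_V (cart_V (complete_V a) (complete_V a)) x y
   = contract_V (cart_V (complete_V a) (complete_V a)) (prod.swap x) (prod.swap y)"
proof -
  have "prod.swap ` (cart_V (complete_V a) (complete_V a) - {x, y}) = cart_V (complete_V a) (complete_V a) - {prod.swap x, prod.swap y}"
    by (simp add: cart_V_def image_set_diff[OF inj_swap] product_swap)
  moreover have "map_option prod.swap ` contract_V (cart_V (complete_V a) (complete_V a)) x y
     = insert None (Some ` (prod.swap ` (cart_V (complete_V a) (complete_V a) - {x, y})))"
    by (simp add: contract_V_def image_image)
  ultimately show ?thesis by (simp add: contract_V_def)
qed

lemma swap_iso_E: "contract_E (cart_E complete_E complete_E) (prod.swap x) (prod.swap y) (map_option prod.swap p) (map_option prod.swap q)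
   = contract_E (cart_E complete_E complete_E) x y p q"
  by (cases p; cases q) (auto simp: contract_E_def cart_E_def complete_E_def prod_eq_iff)


theorem mainTheorem8:
  fixes k a :: nat and x y :: "nat \<times> nat"
  defines "V \<equiv> cart_V (complete_V a) (complete_V a)"
      and "E \<equiv> cart_E complete_E complete_E"
  assumes "k \<ge> 1" and "a \<ge> k + 2"
      and "x \<in> V" and "y \<in> V" and "E x y"
  shows "kpower_dom_num (contract_V V x y) (contract_E E x y) k = a - k - 1"
proof -
  obtain i j where x: "x = (i,j)" by force
  obtain i' j' where y: "y = (i',j')" by force
  have xa: "i<a" "j<a" using assms(5) x by (simp_all add: V_def VV_mem)
  have ya: "i'<a" "j'<a" using assms(6) y by (simp_all add: V_def VV_mem)
  have e: "(i = i' \<and> j \<noteq> j') \<or> (j = j' \<and> i \<noteq> i')" using assms(7) by (auto simp: E_def x y EE_simp)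
  from e show ?thesis
  proof
    assume h: "i = i' \<and> j \<noteq> j'"
    show ?thesis using row_case[of k a i j j'] assms(3,4) xa ya h by (simp add: V_def E_def x y)
  next
    assume h: "j = j' \<and> i \<noteq> i'"
    have inj: "inj (map_option (prod.swap :: nat \<times> nat \<Rightarrow> nat \<times> nat))"
      by (simp add: option.inj_map)
    have "kpower_dom_num (contract_V V x y) (contract_E E x y) k
        = kpower_dom_num (contract_V V (prod.swap x) (prod.swap y)) (contract_E E (prod.swap x) (prod.swap y)) k"
    proof (rule iso_num[where g="map_option prod.swap" and h="map_option prod.swap"])
      show "inj (map_option (prod.swap :: nat \<times> nat \<Rightarrow> nat \<times> nat))" by (rule inj)
      show "inj (map_option (prod.swap :: nat \<times> nat \<Rightarrow> nat \<times> nat))" by (rule inj)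
      show "map_option prod.swap ` contract_V V x y = contract_V V (prod.swap x) (prod.swap y)"
        unfolding V_def by (rule swap_iso_V)
      show "map_option prod.swap ` contract_V V (prod.swap x) (prod.swap y) = contract_V V x y"
        unfolding V_def using swap_iso_V[of a "prod.swap x" "prod.swap y"] by simp
      show "contract_E E (prod.swap x) (prod.swap y) (map_option prod.swap u) (map_option prod.swap v) = contract_E E x y u v" for u v
        unfolding E_def by (rule swap_iso_E)
      show "contract_E E x y (map_option prod.swap u) (map_option prod.swap v) = contract_E E (prod.swap x) (prod.swap y) u v" for u v
        unfolding E_def using swap_iso_E[of "prod.swap x" "prod.swap y" u v] by simp
    qed
    also have "\<dots> = a - k - 1"
      using row_case[of k a j i i'] assms(3,4) xa ya h by (simp add: V_def E_def x y)
    finally show ?thesis .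
  qed
qed

end
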